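(* In the setting described in the context, for each $i\in[n]$, with probability at least $1-O(n^{-10})$: (1) $|(\nabla\mathcal L(\theta^* ))_i|\lesssim\sqrt{np\log n/L}$; (2) $\sum_{j\ne i}(\nabla^2\mathcal L(\theta^* ))_{i,j}^2\lesssim np(1+dp)$, $\sum_{s>n}(\nabla^2\mathcal L(\theta^* ))_{i,s}^2\lesssim ndp^2$, and $\sum_{j\in[n],j\ne i}|(\nabla^2\mathcal L(\theta^* ))_{i,j}|\lesssim np$; (3) $|y_{j,i}-\mathbb Ey_{j,i}|\lesssim\sqrt{\log n/L}$ for all $i\ne j$ with $(i,j)\in\mathcal E$.
   Context: Setting. Items $1,\dots,n$ have fixed covariates $x_1,\dots,x_n\in\mathbb R^d$, $d<n$, rescaled so $\|x_i\|_2\le\sqrt{(d+1)/n}$; $\tilde x_i=(e_i^\top,x_i^\top)^\top\in\mathbb R^{n+d}$, $e_i$ canonical in $\mathbb R^n$; $\theta=(\alpha^\top,\beta^\top)^\top$; true parameter $\theta^*$. Erdős–Rényi comparison graph $\mathcal G=([n],\mathcal E)$, edge probability $p$; for each edge and $l\in[L]$, independent $y^{(l)}_{j,i}\in\{0,1\}$ with $P(y^{(l)}_{j,i}=1)=\phi(\tilde x_i^\top\theta^*-\tilde x_j^\top\theta^* )$, $\phi(t)=e^t/(1+e^t)$, $y^{(l)}_{i,j}=1-y^{(l)}_{j,i}$, $y_{j,i}=L^{-1}\sum_ly^{(l)}_{j,i}$. $\mathcal L(\theta)=\sum_{(i,j)\in\mathcal E,i>j}\{-y_{j,i}(\tilde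 x_i^\top\theta-\tilde x_j^\top\theta)+\log(1+e^{\tilde x_i^\top\theta-\tilde x_j^\top\theta})\}$. Standing assumptions: $pn>c_p\log n$ for a constant $c_p>0$, $npL\gtrsim\log n$, $n$ large. $a\lesssim b$: $a\le Cb$ with $C$ an absolute constant independent of $n,p,L,d$. *)

theory Defs
  imports "HOL-Probability.Probability"
begin

text \<open>Items are indexed 0..n-1 (paper: 1..n). Parameter theta :: nat => real,
  theta k = alpha_k for k < n and theta (n+m) = beta_m for m < d.
  Covariate x i :: nat => real, with coordinates m < d.\<close>

definition logistic :: "real \<Rightarrow> real" where
  "logistic t = exp t / (1 + exp t)"

definition score :: "nat \<Rightarrow> nat \<Rightarrow> (nat \<Rightarrow> nat \<Rightarrow> real) \<Rightarrow> (nat \<Rightarrow> real) \<Rightarrow> nat \<Rightarrow> real" where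
  "score n d x \<theta> i = \<theta> i + (\<Sum>m<d. x i m * \<theta> (n + m))"

text \<open>Unordered pairs, stored as (i,j) with j < i < n.\<close>
definition pairs :: "nat \<Rightarrow> (nat \<times> nat) set" where
  "pairs n = {(i, j). j < i \<and> i < n}"

text \<open>Sample space: G (i,j) says whether the edge {i,j} (j<i) is in the
  Erdos-Renyi graph; Y ((i,j),l) is the l-th comparison outcome y^{(l)}_{j,i}
  (l < L) for the pair j<i.  Outcomes are drawn for every pair; only those on
  edges enter the loss.\<close>
type_synonym sample = "((nat \<times> nat) \<Rightarrow> bool) \<times> (((nat \<times> nat) \<times> nat) \<Rightarrow> bool)"

definition graph_pmf :: "nat \<Rightarrow> real \<Rightarrow> ((nat \<times> nat) \<Rightarrow> bool) pmf" where
  "graph_pmf n p = Pi_pmf (pairs n) False (\<lambda>_. bernoulli_pmf p)"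

definition outcome_pmf ::
  "nat \<Rightarrow> nat \<Rightarrow> nat \<Rightarrow> (nat \<Rightarrow> nat \<Rightarrow> real) \<Rightarrow> (nat \<Rightarrow> real) \<Rightarrow> (((nat \<times> nat) \<times> nat) \<Rightarrow> bool) pmf" where
  "outcome_pmf n d L x \<theta> = Pi_pmf (pairs n \<times> {..<L}) False
     (\<lambda>((i, j), l). bernoulli_pmf (logistic (score n d x \<theta> i - score n d x \<theta> j)))"

definition model_pmf :: "nat \<Rightarrow> nat \<Rightarrow> real \<Rightarrow> nat \<Rightarrow> (nat \<Rightarrow> nat \<Rightarrow> real) \<Rightarrow> (nat \<Rightarrow> real) \<Rightarrow> sample pmf" where
  "model_pmf n d p L x \<theta> = pair_pmf (graph_pmf n p) (outcome_pmf n d L x \<theta>)"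

definition edge :: "sample \<Rightarrow> nat \<Rightarrow> nat \<Rightarrow> bool" where
  "edge \<omega> i j = (i \<noteq> j \<and> (if j < i then fst \<omega> (i, j) else fst \<omega> (j, i)))"

text \<open>y_{j,i} = L^{-1} sum_l y^{(l)}_{j,i}; for i < j, y_{j,i} = 1 - y_{i,j}.\<close>
definition ybar :: "nat \<Rightarrow> sample \<Rightarrow> nat \<Rightarrow> nat \<Rightarrow> real" where
  "ybar L \<omega> j i = (if j < i then (\<Sum>l<L. of_bool (snd \<omega> ((i, j), l))) / real L
                    else 1 - (\<Sum>l<L. of_bool (snd \<omega> ((j, i), l))) / real L)"

definition loss :: "nat \<Rightarrow> nat \<Rightarrow> nat \<Rightarrow> (nat \<Rightarrow> nat \<Rightarrow> real) \<Rightarrow> sample \<Rightarrow> (nat \<Rightarrow> real) \<Rightarrow> real" where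
  "loss n d L x \<omega> \<theta> =
     (\<Sum>(i, j)\<in>{(i, j)\<in>pairs n. fst \<omega> (i, j)}.
        - ybar L \<omega> j i * (score n d x \<theta> i - score n d x \<theta> j)
        + ln (1 + exp (score n d x \<theta> i - score n d x \<theta> j)))"

definition pderiv_at :: "((nat \<Rightarrow> real) \<Rightarrow> real) \<Rightarrow> nat \<Rightarrow> (nat \<Rightarrow> real) \<Rightarrow> real" where
  "pderiv_at f k \<theta> = deriv (\<lambda>t. f (\<theta>(k := t))) (\<theta> k)"

definition grad_loss where
  "grad_loss n d L x \<omega> k \<theta> = pderiv_at (loss n d L x \<omega>) k \<theta>"

definition hess_loss where
  "hess_loss n d L x \<omega> k l \<theta> = pderiv_at (grad_loss n d L x \<omega> l) k \<theta>"

end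

theory Submission
  imports Defs
begin

definition coef :: "nat \<Rightarrow> nat \<Rightarrow> (nat \<Rightarrow> nat \<Rightarrow> real) \<Rightarrow> nat \<Rightarrow> nat \<Rightarrow> real" where
  "coef n d x i k = of_bool (k = i) + (if n \<le> k \<and> k < n + d then x i (k - n) else 0)"

definition lgd :: "real \<Rightarrow> real" where
  "lgd t = exp t / (1 + exp t)\<^sup>2"

lemma lgd_bounds: "0 \<le> lgd t" "lgd t \<le> 1/4"
proof -
  have "0 < exp t" by simp
  then show "0 \<le> lgd t" unfolding lgd_def by simp
  have "4 * exp t \<le> (1 + exp t)\<^sup>2" using zero_le_power2[of "1 - exp t"]
    by (simp add: power2_eq_square algebra_simps)
  then show "lgd t \<le> 1/4" unfolding lgd_def
    by (simp add: divide_le_eq add_pos_pos)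
qed

lemma finite_pairs: "finite (pairs n)"
  by (rule finite_subset[of _ "{..<n} \<times> {..<n}"]) (auto simp: pairs_def)

lemma score_upd:
  assumes "i < n"
  shows "score n d x (\<theta>(k := t)) i = score n d x \<theta> i + coef n d x i k * (t - \<theta> k)"
proof -
  have 1: "(\<theta>(k := t)) i = \<theta> i + of_bool (k = i) * (t - \<theta> k)" by auto
  have 2: "(\<theta>(k := t)) (n + m) = \<theta> (n + m) + (if m = k - n \<and> n \<le> k then t - \<theta> k else 0)" for m
    by auto
  have 3: "(\<Sum>m<d. x i m * (if m = k - n \<and> n \<le> k then t - \<theta> k else 0))
      = (if n \<le> k \<and> k < n + d then x i (k - n) else 0) * (t - \<theta> k)"
  proof (cases "n \<le> k")
    case True
    have "(\<Sum>m<d. x i m * (if m = k - n \<and> n \<le> k then t - \<theta> k else 0))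
        = (\<Sum>m\<in>{..<d}. if m = k - n then x i m * (t - \<theta> k) else 0)"
      using True by (intro sum.cong) auto
    also have "\<dots> = (if k - n \<in> {..<d} then x i (k - n) * (t - \<theta> k) else 0)"
      by (rule sum.delta) simp
    finally show ?thesis using True by auto
  qed simp
  show ?thesis
    unfolding score_def coef_def 1 2 using 3
    by (simp add: algebra_simps sum.distrib sum_distrib_left)
qed

lemma loss_upd:
  "loss n d L x \<omega> (\<theta>(k := t)) =
     (\<Sum>(a, b)\<in>{(i, j)\<in>pairs n. fst \<omega> (i, j)}.
        - ybar L \<omega> b a * ((score n d x \<theta> a - score n d x \<theta> b) + (coef n d x a k - coef n d x b k) * (t - \<theta> k))
        + ln (1 + exp ((score n d x \<theta> a - score n d x \<theta> b) + (coef n d x a k - coef n d x b k) * (t - \<theta> k))))"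
  unfolding loss_def
  by (intro sum.cong refl) (auto simp: score_upd pairs_def algebra_simps)

lemma grad_formula:
  "grad_loss n d L x \<omega> k \<theta> =
     (\<Sum>(a, b)\<in>{(i, j)\<in>pairs n. fst \<omega> (i, j)}.
        (coef n d x a k - coef n d x b k) * (logistic (score n d x \<theta> a - score n d x \<theta> b) - ybar L \<omega> b a))"
proof -
  let ?E = "{(i, j)\<in>pairs n. fst \<omega> (i, j)}"
  have fin: "finite ?E" by (rule finite_subset[OF _ finite_pairs]) auto
  have D: "((\<lambda>t. loss n d L x \<omega> (\<theta>(k := t))) has_real_derivative
     (\<Sum>(a, b)\<in>?E. (coef n d x a k - coef n d x b k) * (logistic (score n d x \<theta> a - score n d x \<theta> b) - ybar L \<omega> b a))) (at (\<theta> k))"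
    unfolding loss_upd case_prod_unfold
  proof (rule DERIV_sum, goal_cases)
    case (1 e)
    define u where "u = score n d x \<theta> (fst e) - score n d x \<theta> (snd e)"
    define c where "c = coef n d x (fst e) k - coef n d x (snd e) k"
    define y where "y = ybar L \<omega> (snd e) (fst e)"
    have "((\<lambda>t. - y * (u + c * (t - \<theta> k)) + ln (1 + exp (u + c * (t - \<theta> k)))) has_real_derivative
        c * (logistic u - y)) (at (\<theta> k))"
      by (rule derivative_eq_intros refl add_pos_pos zero_less_one exp_gt_zero)+ (simp add: logistic_def field_simps)
    then show ?case unfolding u_def c_def y_def by simp
  qed
  show ?thesis unfolding grad_loss_def pderiv_at_def
    using DERIV_imp_deriv[OF D] by simp
qed

lemma hess_formula:
  "hess_loss n d L x \<omega> k l \<theta> =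
     (\<Sum>(a, b)\<in>{(i, j)\<in>pairs n. fst \<omega> (i, j)}.
        (coef n d x a l - coef n d x b l) * (coef n d x a k - coef n d x b k) * lgd (score n d x \<theta> a - score n d x \<theta> b))"
proof -
  let ?E = "{(i, j)\<in>pairs n. fst \<omega> (i, j)}"
  have G: "grad_loss n d L x \<omega> l (\<theta>(k := t)) =
     (\<Sum>(a, b)\<in>?E. (coef n d x a l - coef n d x b l) *
        (logistic ((score n d x \<theta> a - score n d x \<theta> b) + (coef n d x a k - coef n d x b k) * (t - \<theta> k)) - ybar L \<omega> b a))" for t
    unfolding grad_formula
    by (intro sum.cong refl) (auto simp: score_upd pairs_def algebra_simps)
  have D: "((\<lambda>t. grad_loss n d L x \<omega> l (\<theta>(k := t))) has_real_derivative
     (\<Sum>(a, b)\<in>?E. (coef n d x a l - coef n d x b l) * (coef n d x a k - coef n d x b k) * lgd (score n d x \<theta> a - score n d x \<theta> b))) (at (\<theta> k))"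
    unfolding G case_prod_unfold
  proof (rule DERIV_sum, goal_cases)
    case (1 e)
    define u where "u = score n d x \<theta> (fst e) - score n d x \<theta> (snd e)"
    define c where "c = coef n d x (fst e) k - coef n d x (snd e) k"
    define c' where "c' = coef n d x (fst e) l - coef n d x (snd e) l"
    define y where "y = ybar L \<omega> (snd e) (fst e)"
    have "((\<lambda>t. c' * (exp (u + c * (t - \<theta> k)) / (1 + exp (u + c * (t - \<theta> k))) - y)) has_real_derivative
        c' * c * lgd u) (at (\<theta> k))"
    proof -
      have nz: "1 + exp v \<noteq> 0" for v :: real by (smt (verit) exp_gt_zero)
      show ?thesis
        by (rule derivative_eq_intros refl nz)+ (simp add: lgd_def field_simps power2_eq_square nz)
    qed
    then show ?case unfolding u_def c_def y_def c'_def logistic_def by simp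
  qed
  show ?thesis unfolding hess_loss_def pderiv_at_def
    using DERIV_imp_deriv[OF D] by simp
qed

definition cd :: "nat \<Rightarrow> nat \<Rightarrow> (nat \<Rightarrow> nat \<Rightarrow> real) \<Rightarrow> nat \<times> nat \<Rightarrow> nat \<Rightarrow> real" where
  "cd n d x e k = coef n d x (fst e) k - coef n d x (snd e) k"

definition edges :: "nat \<Rightarrow> ((nat \<times> nat) \<Rightarrow> bool) \<Rightarrow> (nat \<times> nat) set" where
  "edges n G = {e\<in>pairs n. G e}"

definition deg :: "nat \<Rightarrow> ((nat \<times> nat) \<Rightarrow> bool) \<Rightarrow> nat \<Rightarrow> real" where
  "deg n G i = (\<Sum>e\<in>edges n G. of_bool (fst e = i \<or> snd e = i))"

lemma finite_edges: "finite (edges n G)"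
  unfolding edges_def by (rule finite_subset[OF _ finite_pairs]) auto

lemma edges_eq: "{(i, j)\<in>pairs n. G (i, j)} = edges n G"
  unfolding edges_def by auto

lemma hess_formula':
  "hess_loss n d L x \<omega> k l \<theta> =
     (\<Sum>e\<in>edges n (fst \<omega>). cd n d x e l * cd n d x e k * lgd (score n d x \<theta> (fst e) - score n d x \<theta> (snd e)))"
  unfolding hess_formula edges_def case_prod_unfold cd_def by (intro sum.cong) auto

lemma grad_formula':
  "grad_loss n d L x \<omega> k \<theta> =
     (\<Sum>e\<in>edges n (fst \<omega>). cd n d x e k * (logistic (score n d x \<theta> (fst e) - score n d x \<theta> (snd e)) - ybar L \<omega> (snd e) (fst e)))"
  unfolding grad_formula edges_def case_prod_unfold cd_def by (intro sum.cong) auto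

lemma cd_abs: "e \<in> edges n G \<Longrightarrow> i < n \<Longrightarrow> \<bar>cd n d x e i\<bar> = of_bool (fst e = i \<or> snd e = i)"
  by (cases e) (auto simp: cd_def coef_def edges_def pairs_def)

lemma cd_sq: "e \<in> edges n G \<Longrightarrow> i < n \<Longrightarrow> (cd n d x e i)\<^sup>2 = of_bool (fst e = i \<or> snd e = i)"
  by (metis cd_abs power2_abs of_bool_def power2_eq_square mult_1 mult_zero_left)

lemma cd_x: "e \<in> edges n G \<Longrightarrow> cd n d x e (n + m) = (if m < d then x (fst e) m - x (snd e) m else 0)"
  by (cases e) (auto simp: cd_def coef_def edges_def pairs_def)

lemma cd_pair: "e \<in> edges n G \<Longrightarrow> i < n \<Longrightarrow> j < n \<Longrightarrow> i \<noteq> j \<Longrightarrow>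
   \<bar>cd n d x e i\<bar> * \<bar>cd n d x e j\<bar> \<le> of_bool (e = (max i j, min i j))"
  by (cases e) (auto simp: cd_def coef_def edges_def pairs_def)

lemma aux14: "0 \<le> l \<Longrightarrow> l \<le> 1/4 \<Longrightarrow> \<bar>a * b * l\<bar> \<le> \<bar>a\<bar> * \<bar>b\<bar> * (1/4 :: real)"
proof -
  assume h: "0 \<le> l" "l \<le> 1/4"
  have "\<bar>a * b * l\<bar> = \<bar>a\<bar> * \<bar>b\<bar> * l" using h by (simp add: abs_mult)
  also have "\<dots> \<le> \<bar>a\<bar> * \<bar>b\<bar> * (1/4)" using h by (intro mult_left_mono) auto
  finally show ?thesis .
qed

lemma sum_abs_hess:
  assumes "i < n"
  shows "(\<Sum>j\<in>{..<n} - {i}. \<bar>hess_loss n d L x \<omega> i j \<theta>\<bar>) \<le> deg n (fst \<omega>) i / 2"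
proof -
  let ?E = "edges n (fst \<omega>)"
  let ?J = "{..<n} - {i}"
  have "(\<Sum>j\<in>?J. \<bar>hess_loss n d L x \<omega> i j \<theta>\<bar>) \<le> (\<Sum>j\<in>?J. \<Sum>e\<in>?E. \<bar>cd n d x e j\<bar> * \<bar>cd n d x e i\<bar> * (1/4))"
  proof (rule sum_mono)
    fix j assume j: "j \<in> ?J"
    show "\<bar>hess_loss n d L x \<omega> i j \<theta>\<bar> \<le> (\<Sum>e\<in>?E. \<bar>cd n d x e j\<bar> * \<bar>cd n d x e i\<bar> * (1/4))"
      unfolding hess_formula'
      apply (rule order_trans[OF sum_abs])
      apply (rule sum_mono)
      apply (rule aux14)
      by (rule lgd_bounds)+
  qed
  also have "\<dots> = (\<Sum>e\<in>?E. \<bar>cd n d x e i\<bar> * (1/4) * (\<Sum>j\<in>?J. \<bar>cd n d x e j\<bar>))"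
    by (subst sum.swap) (simp add: sum_distrib_left mult_ac)
  also have "\<dots> \<le> (\<Sum>e\<in>?E. \<bar>cd n d x e i\<bar> * (1/4) * 2)"
  proof (rule sum_mono, rule mult_left_mono)
    fix e assume e: "e \<in> ?E"
    have "(\<Sum>j\<in>?J. \<bar>cd n d x e j\<bar>) \<le> (\<Sum>j\<in>?J. of_bool (fst e = j) + of_bool (snd e = j))"
      by (rule sum_mono) (use e in \<open>auto simp: cd_abs\<close>)
    also have "\<dots> = (\<Sum>j\<in>?J. of_bool (fst e = j)) + (\<Sum>j\<in>?J. of_bool (snd e = j))"
      by (rule sum.distrib)
    also have "\<dots> \<le> 1 + 1"
      by (intro add_mono) (simp_all add: of_bool_def)
    finally show "(\<Sum>j\<in>?J. \<bar>cd n d x e j\<bar>) \<le> 2" by simp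
  qed simp
  also have "\<dots> = deg n (fst \<omega>) i / 2"
    unfolding deg_def sum_divide_distrib
    by (intro sum.cong refl) (simp add: cd_abs assms)
  finally show ?thesis .
qed

lemma abs_hess_le:
  assumes "i < n" "j < n" "i \<noteq> j"
  shows "\<bar>hess_loss n d L x \<omega> i j \<theta>\<bar> \<le> 1/4"
proof -
  let ?E = "edges n (fst \<omega>)"
  have "\<bar>hess_loss n d L x \<omega> i j \<theta>\<bar> \<le> (\<Sum>e\<in>?E. \<bar>cd n d x e j\<bar> * \<bar>cd n d x e i\<bar> * (1/4))"
    unfolding hess_formula'
    apply (rule order_trans[OF sum_abs])
    apply (rule sum_mono)
    apply (rule aux14)
    by (rule lgd_bounds)+
  also have "\<dots> \<le> (\<Sum>e\<in>?E. of_bool (e = (max i j, min i j)) * (1/4))"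
    by (rule sum_mono, rule mult_right_mono) (use assms cd_pair in \<open>auto simp: mult.commute\<close>)
  also have "\<dots> = (if (max i j, min i j) \<in> ?E then 1/4 else 0)"
  proof -
    have "(\<lambda>e. of_bool (e = (max i j, min i j)) * (1/4::real)) = (\<lambda>e. if e = (max i j, min i j) then 1/4 else 0)"
      by auto
    then show ?thesis using finite_edges[of n "fst \<omega>"] by (simp only: sum.delta)
  qed
  also have "\<dots> \<le> 1/4" by simp
  finally show ?thesis .
qed

lemma sum_sq_hess_lt:
  assumes "i < n"
  shows "(\<Sum>j\<in>{..<n} - {i}. (hess_loss n d L x \<omega> i j \<theta>)\<^sup>2) \<le> deg n (fst \<omega>) i / 8"
proof -
  have "(\<Sum>j\<in>{..<n} - {i}. (hess_loss n d L x \<omega> i j \<theta>)\<^sup>2) \<le> (\<Sum>j\<in>{..<n} - {i}. \<bar>hess_loss n d L x \<omega> i j \<theta>\<bar> * (1/4))"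
  proof (rule sum_mono)
    fix j assume j: "j \<in> {..<n} - {i}"
    have h: "\<bar>hess_loss n d L x \<omega> i j \<theta>\<bar> \<le> 1/4" using j assms by (intro abs_hess_le) auto
    show "(hess_loss n d L x \<omega> i j \<theta>)\<^sup>2 \<le> \<bar>hess_loss n d L x \<omega> i j \<theta>\<bar> * (1/4)"
      unfolding power2_eq_square[symmetric] using h
      by (metis abs_ge_zero mult_left_mono power2_abs power2_eq_square)
  qed
  also have "\<dots> = (\<Sum>j\<in>{..<n} - {i}. \<bar>hess_loss n d L x \<omega> i j \<theta>\<bar>) / 4"
    by (simp add: sum_divide_distrib)
  also have "\<dots> \<le> (deg n (fst \<omega>) i / 2) / 4"
    using sum_abs_hess[OF assms] by (intro divide_right_mono) auto
  finally show ?thesis by simp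
qed

lemma sum_sq_hess_x:
  assumes i: "i < n" and xb: "\<forall>a<n. (\<Sum>m<d. (x a m)\<^sup>2) \<le> (real d + 1) / real n"
  shows "(\<Sum>s\<in>{n..<n+d}. (hess_loss n d L x \<omega> i s \<theta>)\<^sup>2) \<le> (deg n (fst \<omega>) i)\<^sup>2 * (real d + 1) / (4 * real n)"
proof -
  let ?E = "edges n (fst \<omega>)"
  define w where "w e = (of_bool (fst e = i \<or> snd e = i) :: real)" for e
  have wabs: "\<bar>cd n d x e i\<bar> = w e" if "e \<in> ?E" for e using cd_abs[OF that i] w_def by simp
  have w01: "w e * w e = w e" for e by (simp add: w_def)
  have w0: "0 \<le> w e" for e by (simp add: w_def)
  have degw: "deg n (fst \<omega>) i = (\<Sum>e\<in>?E. w e)" unfolding deg_def w_def ..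
  have xd: "(\<Sum>m<d. (x (fst e) m - x (snd e) m)\<^sup>2) \<le> 4 * ((real d + 1) / real n)" if "e \<in> ?E" for e
  proof -
    have ab: "fst e < n" "snd e < n" using that by (auto simp: edges_def pairs_def)
    have "(\<Sum>m<d. (x (fst e) m - x (snd e) m)\<^sup>2) \<le> (\<Sum>m<d. 2 * (x (fst e) m)\<^sup>2 + 2 * (x (snd e) m)\<^sup>2)"
    proof (rule sum_mono)
      fix m
      show "(x (fst e) m - x (snd e) m)\<^sup>2 \<le> 2 * (x (fst e) m)\<^sup>2 + 2 * (x (snd e) m)\<^sup>2"
        using zero_le_power2[of "x (fst e) m + x (snd e) m"] by (simp add: power2_eq_square algebra_simps)
    qed
    also have "\<dots> = 2 * (\<Sum>m<d. (x (fst e) m)\<^sup>2) + 2 * (\<Sum>m<d. (x (snd e) m)\<^sup>2)"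
      by (simp add: sum.distrib sum_distrib_left)
    also have "\<dots> \<le> 4 * ((real d + 1) / real n)"
      using xb[rule_format, OF ab(1)] xb[rule_format, OF ab(2)] by linarith
    finally show ?thesis .
  qed
  have H: "(hess_loss n d L x \<omega> i (n + m) \<theta>)\<^sup>2 \<le> (1/16) * deg n (fst \<omega>) i * (\<Sum>e\<in>?E. w e * (x (fst e) m - x (snd e) m)\<^sup>2)"
    if m: "m < d" for m
  proof -
    have "\<bar>hess_loss n d L x \<omega> i (n + m) \<theta>\<bar> \<le> (\<Sum>e\<in>?E. \<bar>cd n d x e (n + m)\<bar> * \<bar>cd n d x e i\<bar> * (1/4))"
      unfolding hess_formula'
      apply (rule order_trans[OF sum_abs])
      apply (rule sum_mono)
      apply (rule aux14)
      by (rule lgd_bounds)+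
    also have "\<dots> = (1/4) * (\<Sum>e\<in>?E. w e * (w e * \<bar>x (fst e) m - x (snd e) m\<bar>))"
      unfolding sum_distrib_left
    proof (intro sum.cong refl)
      fix e assume e: "e \<in> ?E"
      have ww: "w e * (w e * c) = w e * c" for c by (metis mult.assoc w01)
      show "\<bar>cd n d x e (n + m)\<bar> * \<bar>cd n d x e i\<bar> * (1/4) = 1/4 * (w e * (w e * \<bar>x (fst e) m - x (snd e) m\<bar>))"
        unfolding ww using wabs[OF e] cd_x[OF e, where m=m and d=d and x=x] m by simp
    qed
    finally have h1: "\<bar>hess_loss n d L x \<omega> i (n + m) \<theta>\<bar> \<le> (1/4) * (\<Sum>e\<in>?E. w e * (w e * \<bar>x (fst e) m - x (snd e) m\<bar>))" .
    have "(hess_loss n d L x \<omega> i (n + m) \<theta>)\<^sup>2 \<le> ((1/4) * (\<Sum>e\<in>?E. w e * (w e * \<bar>x (fst e) m - x (snd e) m\<bar>)))\<^sup>2"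
      using power_mono[OF h1 abs_ge_zero, of 2] by simp
    also have "\<dots> = (1/16) * (\<Sum>e\<in>?E. w e * (w e * \<bar>x (fst e) m - x (snd e) m\<bar>))\<^sup>2"
      by (simp add: power2_eq_square)
    also have "\<dots> \<le> (1/16) * ((\<Sum>e\<in>?E. (w e)\<^sup>2) * (\<Sum>e\<in>?E. (w e * \<bar>x (fst e) m - x (snd e) m\<bar>)\<^sup>2))"
      by (intro mult_left_mono Cauchy_Schwarz_ineq_sum) auto
    also have "\<dots> = (1/16) * deg n (fst \<omega>) i * (\<Sum>e\<in>?E. w e * (x (fst e) m - x (snd e) m)\<^sup>2)"
    proof -
      have wsq: "(w e)\<^sup>2 = w e" for e using w01[of e] by (simp add: power2_eq_square)
      have "(\<Sum>e\<in>?E. (w e * \<bar>x (fst e) m - x (snd e) m\<bar>)\<^sup>2) = (\<Sum>e\<in>?E. w e * (x (fst e) m - x (snd e) m)\<^sup>2)"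
        by (intro sum.cong refl) (simp add: power_mult_distrib wsq)
      then show ?thesis unfolding degw wsq by simp
    qed
    finally show ?thesis .
  qed
  have "(\<Sum>s\<in>{n..<n+d}. (hess_loss n d L x \<omega> i s \<theta>)\<^sup>2) = (\<Sum>m<d. (hess_loss n d L x \<omega> i (n + m) \<theta>)\<^sup>2)"
  proof -
    have "{n..<n+d} = (\<lambda>m. n + m) ` {..<d}" 
    proof (auto simp: image_iff)
      fix s assume "n \<le> s" "s < n + d"
      then show "\<exists>m\<in>{..<d}. s = n + m" by (intro bexI[of _ "s - n"]) auto
    qed
    then show ?thesis by (simp add: sum.reindex)
  qed
  also have "\<dots> \<le> (\<Sum>m<d. (1/16) * deg n (fst \<omega>) i * (\<Sum>e\<in>?E. w e * (x (fst e) m - x (snd e) m)\<^sup>2))"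
    by (rule sum_mono) (rule H, simp)
  also have "\<dots> = (1/16) * deg n (fst \<omega>) i * (\<Sum>e\<in>?E. w e * (\<Sum>m<d. (x (fst e) m - x (snd e) m)\<^sup>2))"
  proof -
    have "(\<Sum>m<d. \<Sum>e\<in>?E. w e * (x (fst e) m - x (snd e) m)\<^sup>2) = (\<Sum>e\<in>?E. \<Sum>m<d. w e * (x (fst e) m - x (snd e) m)\<^sup>2)"
      by (rule sum.swap)
    moreover have "(\<Sum>e\<in>?E. \<Sum>m<d. w e * (x (fst e) m - x (snd e) m)\<^sup>2) = (\<Sum>e\<in>?E. w e * (\<Sum>m<d. (x (fst e) m - x (snd e) m)\<^sup>2))"
      by (simp add: sum_distrib_left)
    ultimately show ?thesis by (simp only: sum_distrib_left[symmetric])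
  qed
  also have "\<dots> \<le> (1/16) * deg n (fst \<omega>) i * (\<Sum>e\<in>?E. w e * (4 * ((real d + 1) / real n)))"
  proof (rule mult_left_mono)
    show "(\<Sum>e\<in>?E. w e * (\<Sum>m<d. (x (fst e) m - x (snd e) m)\<^sup>2)) \<le> (\<Sum>e\<in>?E. w e * (4 * ((real d + 1) / real n)))"
      by (rule sum_mono, rule mult_left_mono[OF xd w0])
    show "0 \<le> 1/16 * deg n (fst \<omega>) i" unfolding degw by (simp add: sum_nonneg w0)
  qed
  also have "\<dots> = (deg n (fst \<omega>) i)\<^sup>2 * (real d + 1) / (4 * real n)"
  proof -
    have eq: "(\<Sum>e\<in>?E. w e * (4 * ((real d + 1) / real n))) = (\<Sum>e\<in>?E. w e) * (4 * ((real d + 1) / real n))"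
      by (rule sum_distrib_right[symmetric])
    have "real n \<noteq> 0" using i by simp
    then show ?thesis unfolding degw eq by (simp add: power2_eq_square field_simps)
  qed
  finally show ?thesis .
qed

lemma pair_prob_le:
  assumes "\<And>a. a \<in> set_pmf A \<Longrightarrow> measure_pmf.prob B {b. (a, b) \<in> S} \<le> c"
  shows "measure_pmf.prob (pair_pmf A B) S \<le> c"
proof -
  obtain a0 where a0: "a0 \<in> set_pmf A" using set_pmf_not_empty[of A] by blast
  have c0: "0 \<le> c" using assms[OF a0] measure_nonneg order_trans by blast
  have "emeasure (pair_pmf A B) S = (\<integral>\<^sup>+x. indicator S x \<partial>pair_pmf A B)" by simp
  also have "\<dots> = (\<integral>\<^sup>+a. \<integral>\<^sup>+b. indicator S (a, b) \<partial>B \<partial>A)" by (rule nn_integral_pair_pmf')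
  also have "\<dots> = (\<integral>\<^sup>+a. emeasure B {b. (a, b) \<in> S} \<partial>A)"
  proof (intro nn_integral_cong)
    fix a
    have "(\<lambda>b. indicator S (a, b) :: ennreal) = indicator {b. (a, b) \<in> S}" by (auto simp: indicator_def)
    then show "(\<integral>\<^sup>+b. indicator S (a, b) \<partial>B) = emeasure B {b. (a, b) \<in> S}" by simp
  qed
  also have "\<dots> \<le> (\<integral>\<^sup>+a. ennreal c \<partial>A)"
  proof (rule nn_integral_mono_AE, rule AE_pmfI)
    fix a assume "a \<in> set_pmf A"
    then show "emeasure B {b. (a, b) \<in> S} \<le> ennreal c"
      using assms by (simp add: measure_pmf.emeasure_eq_measure ennreal_leI)
  qed
  also have "\<dots> = ennreal c" by (simp add: measure_pmf.emeasure_space_1)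
  finally show ?thesis using c0 by (simp add: measure_pmf.emeasure_eq_measure)
qed

lemma prob_fst_pair: "measure_pmf.prob (pair_pmf A B) {\<omega>. P (fst \<omega>)} = measure_pmf.prob A {a. P a}"
proof -
  have "measure_pmf.prob (pair_pmf A B) {\<omega>. P (fst \<omega>)} = measure_pmf.prob (map_pmf fst (pair_pmf A B)) {a. P a}"
    by (simp add: vimage_def)
  then show ?thesis by (simp only: map_fst_pair_pmf)
qed

lemma prob_snd_pair: "measure_pmf.prob (pair_pmf A B) {\<omega>. P (snd \<omega>)} = measure_pmf.prob B {a. P a}"
proof -
  have "measure_pmf.prob (pair_pmf A B) {\<omega>. P (snd \<omega>)} = measure_pmf.prob (map_pmf snd (pair_pmf A B)) {a. P a}"
    by (simp add: vimage_def)
  then show ?thesis by (simp only: map_snd_pair_pmf)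
qed

lemma logistic_bounds: "0 \<le> logistic t" "logistic t \<le> 1"
  unfolding logistic_def by (simp_all add: add_pos_pos)

lemma outcome_component:
  assumes "e \<in> pairs n" "l < L"
  shows "map_pmf (\<lambda>y. y (e, l)) (outcome_pmf n d L x \<theta>) =
     bernoulli_pmf (logistic (score n d x \<theta> (fst e) - score n d x \<theta> (snd e)))"
  unfolding outcome_pmf_def using assms finite_pairs
  by (subst Pi_pmf_component) (auto simp: case_prod_unfold)

lemma outcome_expect:
  assumes "e \<in> pairs n" "l < L"
  shows "measure_pmf.expectation (outcome_pmf n d L x \<theta>) (\<lambda>y. f (y (e, l)) :: real) =
     f True * logistic (score n d x \<theta> (fst e) - score n d x \<theta> (snd e)) +
     f False * (1 - logistic (score n d x \<theta> (fst e) - score n d x \<theta> (snd e)))"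
proof -
  have "measure_pmf.expectation (outcome_pmf n d L x \<theta>) (\<lambda>y. f (y (e, l))) =
        measure_pmf.expectation (map_pmf (\<lambda>y. y (e, l)) (outcome_pmf n d L x \<theta>)) f"
    by simp
  also have "\<dots> = f True * logistic (score n d x \<theta> (fst e) - score n d x \<theta> (snd e)) +
     f False * (1 - logistic (score n d x \<theta> (fst e) - score n d x \<theta> (snd e)))" unfolding outcome_component[OF assms]
    using logistic_bounds by simp
  finally show ?thesis .
qed

lemma hoeff:
  fixes \<sigma> :: "nat \<times> nat \<Rightarrow> real"
  assumes S: "S \<subseteq> pairs n" and \<epsilon>: "\<epsilon> > 0"
  shows "measure_pmf.prob (outcome_pmf n d L x \<theta>)
     {y. \<epsilon> \<le> \<bar>\<Sum>e\<in>S. \<sigma> e * (\<Sum>l<L. of_bool (y (e, l)) - logistic (score n d x \<theta> (fst e) - score n d x \<theta> (snd e)))\<bar>}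
     \<le> 2 * exp (- 2 * \<epsilon>\<^sup>2 / (real L * (\<Sum>e\<in>S. (\<sigma> e)\<^sup>2)))"
proof -
  define Y where "Y = outcome_pmf n d L x \<theta>"
  define \<phi> where "\<phi> e = logistic (score n d x \<theta> (fst e) - score n d x \<theta> (snd e))" for e
  have finS: "finite S" using S finite_pairs finite_subset by blast
  show ?thesis
  proof (cases "real L * (\<Sum>e\<in>S. (\<sigma> e)\<^sup>2) = 0")
    case True
    have "(\<Sum>e\<in>S. \<sigma> e * (\<Sum>l<L. of_bool (y (e, l)) - \<phi> e)) = 0" for y
    proof (cases "L = 0")
      case False
      then have "(\<Sum>e\<in>S. (\<sigma> e)\<^sup>2) = 0" using True by simp
      then have "\<forall>e\<in>S. (\<sigma> e)\<^sup>2 = 0" using finS by (subst (asm) sum_nonneg_eq_0_iff) auto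
      then show ?thesis by simp
    qed simp
    then have "{y. \<epsilon> \<le> \<bar>\<Sum>e\<in>S. \<sigma> e * (\<Sum>l<L. of_bool (y (e, l)) - \<phi> e)\<bar>} = {}"
      using \<epsilon> by auto
    then show ?thesis unfolding \<phi>_def by simp
  next
    case False
    then have pos: "real L * (\<Sum>e\<in>S. (\<sigma> e)\<^sup>2) > 0"
      by (metis linorder_neqE_linordered_idom mult_nonneg_nonneg of_nat_0_le_iff sum_nonneg zero_le_power2 not_le)
    define I where "I = S \<times> {..<L}"
    define X where "X i y = \<sigma> (fst i) * of_bool (y i)" for i and y :: "(nat \<times> nat) \<times> nat \<Rightarrow> bool"
    define a where "a i = min 0 (\<sigma> (fst i))" for i :: "(nat \<times> nat) \<times> nat"
    define b where "b i = max 0 (\<sigma> (fst i))" for i :: "(nat \<times> nat) \<times> nat"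
    have finI: "finite I" unfolding I_def using finS by simp
    have ind0: "prob_space.indep_vars (measure_pmf Y) (\<lambda>_. count_space UNIV) (\<lambda>i f. f i) (pairs n \<times> {..<L})"
      unfolding Y_def outcome_pmf_def by (rule indep_vars_Pi_pmf) (simp add: finite_pairs)
    have ind: "prob_space.indep_vars (measure_pmf Y) (\<lambda>_. borel) X I"
    proof -
      have "prob_space.indep_vars (measure_pmf Y) (\<lambda>_. borel) (\<lambda>i f. (\<lambda>v. \<sigma> (fst i) * of_bool v) (f i)) (pairs n \<times> {..<L})"
        by (rule prob_space.indep_vars_compose2[OF measure_pmf.prob_space_axioms ind0]) simp
      then have "prob_space.indep_vars (measure_pmf Y) (\<lambda>_. borel) X (pairs n \<times> {..<L})"
        unfolding X_def by simp
      then show ?thesis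
        by (rule prob_space.indep_vars_subset[OF measure_pmf.prob_space_axioms]) (use S in \<open>auto simp: I_def\<close>)
    qed
    interpret H: Hoeffding_ineq "measure_pmf Y" I X a b "\<Sum>i\<in>I. measure_pmf.expectation Y (X i)"
    proof unfold_locales
      show "finite I" by (rule finI)
      show "prob_space.indep_vars (measure_pmf Y) (\<lambda>_. borel) X I" by (rule ind)
      fix i assume "i \<in> I"
      show "AE x in measure_pmf Y. X i x \<in> {a i..b i}"
        by (intro AE_I2) (auto simp: X_def a_def b_def)
    qed simp
    have EX: "measure_pmf.expectation Y (X i) = \<sigma> (fst i) * \<phi> (fst i)" if iI: "i \<in> I" for i
    proof -
      obtain e l where i: "i = (e, l)" "e \<in> S" "l < L" using iI unfolding I_def by blast
      have "measure_pmf.expectation Y (X i) = measure_pmf.expectation Y (\<lambda>y. (\<lambda>v. \<sigma> e * of_bool v) (y (e, l)))"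
        unfolding X_def i by simp
      also have "\<dots> = \<sigma> e * \<phi> e"
        unfolding Y_def \<phi>_def using i S by (subst outcome_expect) auto
      finally show ?thesis using i by simp
    qed
    have sumX: "(\<Sum>i\<in>I. X i y) - (\<Sum>i\<in>I. measure_pmf.expectation Y (X i)) =
        (\<Sum>e\<in>S. \<sigma> e * (\<Sum>l<L. of_bool (y (e, l)) - \<phi> e))" for y
    proof -
      have "(\<Sum>i\<in>I. X i y) - (\<Sum>i\<in>I. measure_pmf.expectation Y (X i)) = (\<Sum>i\<in>I. X i y - \<sigma> (fst i) * \<phi> (fst i))"
        using EX by (simp add: sum_subtractf)
      also have "\<dots> = (\<Sum>e\<in>S. \<Sum>l<L. \<sigma> e * (of_bool (y (e, l)) - \<phi> e))"
        unfolding I_def X_def by (simp add: sum.cartesian_product case_prod_unfold algebra_simps)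
      also have "\<dots> = (\<Sum>e\<in>S. \<sigma> e * (\<Sum>l<L. of_bool (y (e, l)) - \<phi> e))"
        by (simp add: sum_distrib_left)
      finally show ?thesis .
    qed
    have sumab: "(\<Sum>i\<in>I. (b i - a i)\<^sup>2) = real L * (\<Sum>e\<in>S. (\<sigma> e)\<^sup>2)"
    proof -
      have "(\<Sum>i\<in>I. (b i - a i)\<^sup>2) = (\<Sum>e\<in>S. \<Sum>l<L. (\<sigma> e)\<^sup>2)"
        
      proof -
        have "(b i - a i)\<^sup>2 = (\<sigma> (fst i))\<^sup>2" for i by (simp add: a_def b_def max_def min_def)
        moreover have "(\<Sum>i\<in>S \<times> {..<L}. (\<sigma> (fst i))\<^sup>2) = (\<Sum>e\<in>S. \<Sum>l<L. (\<sigma> e)\<^sup>2)"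
          by (subst sum.cartesian_product) (simp add: case_prod_unfold)
        ultimately show ?thesis unfolding I_def by simp
      qed
      then show ?thesis by (simp add: sum_distrib_left)
    qed
    have "measure_pmf.prob Y {x \<in> space (measure_pmf Y). \<epsilon> \<le> \<bar>(\<Sum>i\<in>I. X i x) - (\<Sum>i\<in>I. measure_pmf.expectation Y (X i))\<bar>}
        \<le> 2 * exp (- 2 * \<epsilon>\<^sup>2 / (\<Sum>i\<in>I. (b i - a i)\<^sup>2))"
      by (rule H.Hoeffding_ineq_abs_ge) (use \<epsilon> pos sumab in auto)
    moreover have "{x \<in> space (measure_pmf Y). \<epsilon> \<le> \<bar>(\<Sum>i\<in>I. X i x) - (\<Sum>i\<in>I. measure_pmf.expectation Y (X i))\<bar>}
       = {y. \<epsilon> \<le> \<bar>\<Sum>e\<in>S. \<sigma> e * (\<Sum>l<L. of_bool (y (e, l)) - \<phi> e)\<bar>}"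
      using sumX by auto
    ultimately show ?thesis unfolding sumab Y_def \<phi>_def by simp
  qed
qed

lemma deg_alt: "deg n G i = (\<Sum>e\<in>pairs n. of_bool (G e \<and> (fst e = i \<or> snd e = i)))"
  unfolding deg_def edges_def sum.inter_filter[OF finite_pairs] by (intro sum.cong refl) auto

lemma sum_q_le: "(\<Sum>e\<in>pairs n. of_bool (fst e = i \<or> snd e = i) :: real) \<le> 2 * real n"
proof -
  have "(\<Sum>e\<in>pairs n. of_bool (fst e = i \<or> snd e = i) :: real) \<le> (\<Sum>e\<in>pairs n. of_bool (fst e = i) + of_bool (snd e = i))"
    by (rule sum_mono) auto
  also have "\<dots> \<le> (\<Sum>e\<in>{..<n} \<times> {..<n}. of_bool (fst e = i) + of_bool (snd e = i))"
    by (rule sum_mono2) (auto simp: pairs_def)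
  also have "\<dots> = (\<Sum>a<n. \<Sum>b<n. of_bool (a = i) + of_bool (b = i))"
    by (subst sum.cartesian_product) (simp add: case_prod_unfold)
  also have "\<dots> = (\<Sum>a<n. real n * of_bool (a = i) + of_bool (i < n))"
    by (simp add: sum.distrib of_bool_def sum.If_cases)
  also have "\<dots> \<le> (\<Sum>a<n. real n * of_bool (a = i) + 1)"
    by (rule sum_mono) auto
  also have "\<dots> = real n * of_bool (i < n) + real n"
    by (simp add: sum.distrib sum_distrib_left[symmetric] of_bool_def sum.If_cases)
  also have "\<dots> \<le> 2 * real n" by simp
  finally show ?thesis .
qed

lemma deg_tail:
  assumes p: "0 \<le> p" "p \<le> 1"
  shows "measure_pmf.prob (graph_pmf n p) {G. t \<le> deg n G i} \<le> exp (4 * p * real n - t)"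
proof -
  define q where "q e = (fst e = i \<or> snd e = i)" for e :: "nat \<times> nat"
  define f where "f e v = exp (of_bool (v \<and> q e) :: real)" for e v
  have expdeg: "exp (deg n G i) = (\<Prod>e\<in>pairs n. f e (G e))" for G
    unfolding deg_alt f_def q_def by (rule exp_sum[OF finite_pairs])
  have finb: "finite (set_pmf (bernoulli_pmf p))" by (rule finite_subset[OF subset_UNIV]) simp
  have int: "integrable (measure_pmf (graph_pmf n p)) (\<lambda>G. exp (deg n G i))"
    unfolding expdeg graph_pmf_def
    by (rule integrable_prod_Pi_pmf[OF finite_pairs]) (rule integrable_measure_pmf_finite[OF finb])
  have E: "measure_pmf.expectation (graph_pmf n p) (\<lambda>G. exp (deg n G i)) = (\<Prod>e\<in>pairs n. measure_pmf.expectation (bernoulli_pmf p) (f e))"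
    unfolding expdeg graph_pmf_def
    by (rule expectation_prod_Pi_pmf[OF finite_pairs]) (auto intro: integrable_measure_pmf_finite[OF finb] simp: f_def)
  also have "\<dots> \<le> (\<Prod>e\<in>pairs n. exp (2 * p * of_bool (q e)))"
  proof (rule prod_mono, rule conjI)
    fix e
    show "0 \<le> measure_pmf.expectation (bernoulli_pmf p) (f e)"
      using p by (simp add: f_def)
    show "measure_pmf.expectation (bernoulli_pmf p) (f e) \<le> exp (2 * p * of_bool (q e))"
    proof (cases "q e")
      case True
      have "measure_pmf.expectation (bernoulli_pmf p) (f e) = exp 1 * p + (1 - p)"
        using p True by (simp add: f_def)
      also have "\<dots> \<le> 1 + 2 * p" using mult_right_mono[OF exp_le p(1)] by linarith
      also have "\<dots> \<le> exp (2 * p)" by (rule exp_ge_add_one_self)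
      finally show ?thesis using True by simp
    qed (use p in \<open>simp add: f_def\<close>)
  qed
  also have "\<dots> = exp (2 * p * (\<Sum>e\<in>pairs n. of_bool (q e)))"
    unfolding sum_distrib_left by (rule exp_sum[OF finite_pairs, symmetric])
  also have "\<dots> \<le> exp (2 * p * (2 * real n))"
    using sum_q_le[where n=n and i=i] p unfolding q_def by (intro exp_mono mult_left_mono) auto
  finally have Ebound: "measure_pmf.expectation (graph_pmf n p) (\<lambda>G. exp (deg n G i)) \<le> exp (4 * p * real n)"
    by (simp add: mult_ac)
  have "measure_pmf.prob (graph_pmf n p) {G. t \<le> deg n G i} = measure_pmf.prob (graph_pmf n p) {G \<in> space (measure_pmf (graph_pmf n p)). exp t \<le> exp (deg n G i)}"
    by simp
  also have "\<dots> \<le> measure_pmf.expectation (graph_pmf n p) (\<lambda>G. exp (deg n G i)) / exp t"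
    by (rule integral_Markov_inequality_measure[OF int, where A = UNIV]) auto
  also have "\<dots> \<le> exp (4 * p * real n) / exp t"
    by (rule divide_right_mono[OF Ebound]) simp
  also have "\<dots> = exp (4 * p * real n - t)" by (simp add: exp_diff)
  finally show ?thesis .
qed

lemma alg1: "(L::real) > 0 \<Longrightarrow> c * (f - S / L) = - (c * (S - L * f)) / L"
  by (simp add: field_simps)

lemma alg2: "(L::real) > 0 \<Longrightarrow> \<bar>S / L - f\<bar> = \<bar>S - L * f\<bar> / L"
proof -
  assume "L > 0"
  then have eq: "S / L - f = (S - L * f) / L" by (simp add: field_simps)
  show ?thesis unfolding eq abs_divide abs_minus_cancel using \<open>L > 0\<close> by simp
qed

lemma alg3: "(L::real) > 0 \<Longrightarrow> \<bar>(1 - S / L) - (1 - f)\<bar> = \<bar>S - L * f\<bar> / L"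
proof -
  assume "L > 0"
  then have eq: "(1 - S / L) - (1 - f) = - ((S - L * f) / L)" by (simp add: field_simps)
  show ?thesis unfolding eq abs_divide abs_minus_cancel using \<open>L > 0\<close> by simp
qed

abbreviation phi where "phi n d x \<theta> e \<equiv> logistic (score n d x \<theta> (fst e) - score n d x \<theta> (snd e))"

lemma expect_Ysum:
  assumes e: "e \<in> pairs n" and L: "L \<ge> 1"
  shows "measure_pmf.expectation (model_pmf n d p L x \<theta>) (\<lambda>\<omega>. (\<Sum>l<L. of_bool (snd \<omega> (e, l))) / real L) = phi n d x \<theta> e"
proof -
  let ?Y = "outcome_pmf n d L x \<theta>"
  have "measure_pmf.expectation (model_pmf n d p L x \<theta>) (\<lambda>\<omega>. (\<Sum>l<L. of_bool (snd \<omega> (e, l))) / real L)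
      = measure_pmf.expectation (map_pmf snd (model_pmf n d p L x \<theta>)) (\<lambda>y. (\<Sum>l<L. of_bool (y (e, l))) / real L)"
    by simp
  also have "map_pmf snd (model_pmf n d p L x \<theta>) = ?Y" unfolding model_pmf_def by (rule map_snd_pair_pmf)
  also have "measure_pmf.expectation ?Y (\<lambda>y. (\<Sum>l<L. of_bool (y (e, l))) / real L)
      = (\<Sum>l<L. measure_pmf.expectation ?Y (\<lambda>y. of_bool (y (e, l)))) / real L"
  proof -
    have "integrable (measure_pmf ?Y) (\<lambda>y. of_bool (y (e, l)) :: real)" for l
      by (rule measure_pmf.integrable_const_bound[where B = 1]) auto
    note int = this
    show ?thesis
      apply (subst integral_divide_zero)
      apply (subst Bochner_Integration.integral_sum)
       apply (rule int)
      apply (rule refl)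
      done
  qed
  also have "\<dots> = (\<Sum>l<L. phi n d x \<theta> e) / real L"
    by (intro arg_cong[where f = "\<lambda>t. t / real L"] sum.cong refl) (subst outcome_expect, use e in auto)
  also have "\<dots> = phi n d x \<theta> e" using L by simp
  finally show ?thesis .
qed

lemma ybar_dev:
  assumes ab: "a < n" "b < n" "a \<noteq> b" and L: "L \<ge> 1"
  shows "\<bar>ybar L \<omega> b a - measure_pmf.expectation (model_pmf n d p L x \<theta>) (\<lambda>\<omega>'. ybar L \<omega>' b a)\<bar>
     = \<bar>\<Sum>l<L. of_bool (snd \<omega> ((max a b, min a b), l)) - phi n d x \<theta> (max a b, min a b)\<bar> / real L"
proof -
  define e where "e = (max a b, min a b)"
  have e: "e \<in> pairs n" using ab by (auto simp: e_def pairs_def)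
  have Lpos: "real L > 0" using L by simp
  have dev: "(\<Sum>l<L. of_bool (snd \<omega> (e, l)) - phi n d x \<theta> e) = (\<Sum>l<L. of_bool (snd \<omega> (e, l))) - real L * phi n d x \<theta> e"
    by (simp only: sum_subtractf sum_constant) simp
  show ?thesis
  proof (cases "b < a")
    case True
    then have yb: "ybar L \<omega>' b a = (\<Sum>l<L. of_bool (snd \<omega>' (e, l))) / real L" for \<omega>'
      by (simp add: ybar_def e_def max_def min_def)
    show ?thesis unfolding yb expect_Ysum[OF e L] e_def[symmetric] dev
      by (rule alg2[OF Lpos])
  next
    case False
    then have ba: "a < b" using ab by simp
    then have yb: "ybar L \<omega>' b a = 1 - (\<Sum>l<L. of_bool (snd \<omega>' (e, l))) / real L" for \<omega>'
      by (simp add: ybar_def e_def max_def min_def)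
    have "measure_pmf.expectation (model_pmf n d p L x \<theta>) (\<lambda>\<omega>'. 1 - (\<Sum>l<L. of_bool (snd \<omega>' (e, l))) / real L)
        = 1 - measure_pmf.expectation (model_pmf n d p L x \<theta>) (\<lambda>\<omega>'. (\<Sum>l<L. of_bool (snd \<omega>' (e, l))) / real L)"
    proof (subst Bochner_Integration.integral_diff)
      show "integrable (measure_pmf (model_pmf n d p L x \<theta>)) (\<lambda>\<omega>'. (\<Sum>l<L. of_bool (snd \<omega>' (e, l))) / real L :: real)"
      proof (rule measure_pmf.integrable_const_bound[where B = "real L / real L"])
        show "AE \<omega>' in measure_pmf (model_pmf n d p L x \<theta>). norm ((\<Sum>l<L. of_bool (snd \<omega>' (e, l))) / real L :: real) \<le> real L / real L"
        proof (rule AE_I2)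
          fix \<omega>'
          have "(\<Sum>l<L. of_bool (snd \<omega>' (e, l)) :: real) \<le> (\<Sum>l<L. 1)" by (rule sum_mono) simp
          moreover have "0 \<le> (\<Sum>l<L. of_bool (snd \<omega>' (e, l)) :: real)" by (rule sum_nonneg) simp
          ultimately show "norm ((\<Sum>l<L. of_bool (snd \<omega>' (e, l))) / real L :: real) \<le> real L / real L"
            by (simp only: real_norm_def abs_divide abs_of_pos[OF Lpos] abs_of_nonneg) (intro divide_right_mono, simp_all)
        qed
      qed simp
    qed (simp_all add: measure_pmf.prob_space)
    then show ?thesis unfolding yb expect_Ysum[OF e L] e_def[symmetric] dev
      by (simp only: alg3[OF Lpos])
  qed
qed

lemma grad_eq:
  assumes L: "L \<ge> 1"
  shows "grad_loss n d L x \<omega> i \<theta> = - (\<Sum>e\<in>edges n (fst \<omega>). cd n d x e i * (\<Sum>l<L. of_bool (snd \<omega> (e, l)) - phi n d x \<theta> e)) / real L"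
proof -
  have Lpos: "real L > 0" using L by simp
  have "grad_loss n d L x \<omega> i \<theta> = (\<Sum>e\<in>edges n (fst \<omega>). - (cd n d x e i * (\<Sum>l<L. of_bool (snd \<omega> (e, l)) - phi n d x \<theta> e)) / real L)"
    unfolding grad_formula'
  proof (intro sum.cong refl)
    fix e assume "e \<in> edges n (fst \<omega>)"
    then have lt: "snd e < fst e" by (auto simp: edges_def pairs_def)
    have yb: "ybar L \<omega> (snd e) (fst e) = (\<Sum>l<L. of_bool (snd \<omega> (e, l))) / real L"
      using lt by (simp add: ybar_def)
    have dv: "(\<Sum>l<L. of_bool (snd \<omega> (e, l)) - phi n d x \<theta> e) = (\<Sum>l<L. of_bool (snd \<omega> (e, l))) - real L * phi n d x \<theta> e"
      by (simp only: sum_subtractf sum_constant) simp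
    show "cd n d x e i * (phi n d x \<theta> e - ybar L \<omega> (snd e) (fst e)) =
        - (cd n d x e i * (\<Sum>l<L. of_bool (snd \<omega> (e, l)) - phi n d x \<theta> e)) / real L"
      unfolding yb dv by (rule alg1[OF Lpos])
  qed
  also have "\<dots> = - (\<Sum>e\<in>edges n (fst \<omega>). cd n d x e i * (\<Sum>l<L. of_bool (snd \<omega> (e, l)) - phi n d x \<theta> e)) / real L"
    by (simp only: sum_divide_distrib[symmetric] sum_negf)
  finally show ?thesis .
qed

lemma exp_mln: "0 < y \<Longrightarrow> exp (- (real k * ln y)) = 1 / y ^ k"
proof -
  assume y: "0 < y"
  have "exp (real k * ln y) = exp (ln y) ^ k" by (rule exp_of_nat_mult)
  also have "\<dots> = y ^ k" using y by simp
  finally show ?thesis by (simp add: exp_minus inverse_eq_divide)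
qed

lemma card_pairs: "real (card (pairs n)) \<le> real n ^ 2"
proof -
  have "card (pairs n) \<le> card ({..<n} \<times> {..<n})"
    by (rule card_mono) (auto simp: pairs_def)
  then have "card (pairs n) \<le> n * n" by simp
  then have "real (card (pairs n)) \<le> real (n * n)" by (simp only: of_nat_le_iff)
  then show ?thesis by (simp add: power2_eq_square)
qed

lemma deg_nonneg: "0 \<le> deg n G i"
  unfolding deg_def by (rule sum_nonneg) simp

lemma sum_cd_sq: "i < n \<Longrightarrow> (\<Sum>e\<in>edges n G. (cd n d x e i)\<^sup>2) = deg n G i"
  unfolding deg_def by (intro sum.cong refl) (simp add: cd_sq)

lemma deg0_cd: "i < n \<Longrightarrow> deg n G i = 0 \<Longrightarrow> e \<in> edges n G \<Longrightarrow> cd n d x e i = 0"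
proof -
  assume i: "i < n" and d0: "deg n G i = 0" and e: "e \<in> edges n G"
  have "\<forall>e\<in>edges n G. (cd n d x e i)\<^sup>2 = 0"
  proof -
    have "(\<Sum>e\<in>edges n G. (cd n d x e i)\<^sup>2) = 0" using d0 sum_cd_sq[OF i, where G=G and d=d and x=x] by simp
    then show ?thesis using sum_nonneg_eq_0_iff[OF finite_edges[of n G], of "\<lambda>e. (cd n d x e i)\<^sup>2"] by simp
  qed
  then show ?thesis using e by simp
qed

lemma claim_B1:
  assumes cp: "cp > 0" and p: "0 \<le> p" "p \<le> 1" and pn: "p * real n > cp * ln (real n)" and n: "n > 0"
    and K: "K = 4 + 10 / cp"
  shows "measure_pmf.prob (model_pmf n d p L x \<theta>) {\<omega>. K * real n * p \<le> deg n (fst \<omega>) i} \<le> 1 / real n ^ 10"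
proof -
  have "measure_pmf.prob (model_pmf n d p L x \<theta>) {\<omega>. K * real n * p \<le> deg n (fst \<omega>) i}
      = measure_pmf.prob (graph_pmf n p) {G. K * real n * p \<le> deg n G i}"
    unfolding model_pmf_def by (rule prob_fst_pair)
  also have "\<dots> \<le> exp (4 * p * real n - K * real n * p)" by (rule deg_tail[OF p])
  also have "\<dots> \<le> exp (- (real 10 * ln (real n)))"
  proof (rule exp_mono)
    have "4 * p * real n - K * real n * p = - ((10 / cp) * (p * real n))" unfolding K by (simp add: algebra_simps)
    also have "\<dots> \<le> - ((10 / cp) * (cp * ln (real n)))"
      using pn cp by (intro le_imp_neg_le mult_left_mono) auto
    also have "\<dots> = - (real 10 * ln (real n))" using cp by simp
    finally show "4 * p * real n - K * real n * p \<le> - (real 10 * ln (real n))" .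
  qed
  also have "\<dots> = 1 / real n ^ 10" using n by (subst exp_mln) auto
  finally show ?thesis .
qed

lemma claim_B2:
  assumes ln: "ln (real n) > 0" and L: "L \<ge> 1" and C: "C\<^sup>2 \<ge> 6" "C > 0"
  shows "measure_pmf.prob (model_pmf n d p L x \<theta>)
     (\<Union>e\<in>pairs n. {\<omega>. real L * (C * sqrt (ln (real n) / real L)) \<le> \<bar>\<Sum>l<L. of_bool (snd \<omega> (e, l)) - phi n d x \<theta> e\<bar>})
     \<le> 2 / real n ^ 10"
proof -
  define ty where "ty = C * sqrt (ln (real n) / real L)"
  have n: "real n > 0" using ln by (metis ln_less_zero_iff ln_one not_less_iff_gr_or_eq of_nat_0_less_iff  gr0I of_nat_0 ln_0 less_irrefl)
  have Lpos: "real L > 0" using L by simp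
  have typos: "real L * ty > 0" unfolding ty_def using ln Lpos C by simp
  have each: "measure_pmf.prob (model_pmf n d p L x \<theta>)
      {\<omega>. real L * ty \<le> \<bar>\<Sum>l<L. of_bool (snd \<omega> (e, l)) - phi n d x \<theta> e\<bar>} \<le> 2 / real n ^ 12"
    if e: "e \<in> pairs n" for e
  proof -
    have "measure_pmf.prob (model_pmf n d p L x \<theta>)
      {\<omega>. real L * ty \<le> \<bar>\<Sum>l<L. of_bool (snd \<omega> (e, l)) - phi n d x \<theta> e\<bar>}
      = measure_pmf.prob (outcome_pmf n d L x \<theta>)
      {y. real L * ty \<le> \<bar>\<Sum>e'\<in>{e}. (\<lambda>_. 1) e' * (\<Sum>l<L. of_bool (y (e', l)) - phi n d x \<theta> e')\<bar>}"
      unfolding model_pmf_def by (subst prob_snd_pair) simp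
    also have "\<dots> \<le> 2 * exp (- 2 * (real L * ty)\<^sup>2 / (real L * (\<Sum>e'\<in>{e}. ((\<lambda>_. 1::real) e')\<^sup>2)))"
      by (rule hoeff) (use e typos in auto)
    also have "- 2 * (real L * ty)\<^sup>2 / (real L * (\<Sum>e'\<in>{e}. ((\<lambda>_. 1::real) e')\<^sup>2)) = - (2 * C\<^sup>2 * ln (real n))"
      unfolding ty_def using Lpos ln by (simp add: power_mult_distrib power2_eq_square field_simps)
    also have "2 * exp (- (2 * C\<^sup>2 * ln (real n))) \<le> 2 * exp (- (real 12 * ln (real n)))"
      using C ln by (intro mult_left_mono exp_mono) auto
    also have "\<dots> = 2 / real n ^ 12" using n by (subst exp_mln) auto
    finally show ?thesis .
  qed
  have "measure_pmf.prob (model_pmf n d p L x \<theta>)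
     (\<Union>e\<in>pairs n. {\<omega>. real L * ty \<le> \<bar>\<Sum>l<L. of_bool (snd \<omega> (e, l)) - phi n d x \<theta> e\<bar>})
     \<le> (\<Sum>e\<in>pairs n. measure_pmf.prob (model_pmf n d p L x \<theta>) {\<omega>. real L * ty \<le> \<bar>\<Sum>l<L. of_bool (snd \<omega> (e, l)) - phi n d x \<theta> e\<bar>})"
    by (rule measure_pmf.finite_measure_subadditive_finite) (auto simp: finite_pairs)
  also have "\<dots> \<le> (\<Sum>e\<in>pairs n. 2 / real n ^ 12)" by (rule sum_mono) (rule each)
  also have "\<dots> = real (card (pairs n)) * (2 / real n ^ 12)" by simp
  also have "\<dots> \<le> real n ^ 2 * (2 / real n ^ 12)" by (rule mult_right_mono[OF card_pairs]) simp
  also have "\<dots> = 2 / real n ^ 10" using n by (simp add: field_simps power_add[symmetric] eval_nat_numeral)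
  finally show ?thesis unfolding ty_def .
qed


lemma claim_B3:
  assumes i: "i < n" and ln: "ln (real n) > 0" and L: "L \<ge> 1" and p: "p > 0" and K: "K > 0"
    and C: "C\<^sup>2 \<ge> 5 * K" "C > 0"
  shows "measure_pmf.prob (model_pmf n d p L x \<theta>)
     {\<omega>. deg n (fst \<omega>) i < K * real n * p \<and>
         real L * (C * sqrt (real n * p * ln (real n) / real L)) \<le>
         \<bar>\<Sum>e\<in>edges n (fst \<omega>). cd n d x e i * (\<Sum>l<L. of_bool (snd \<omega> (e, l)) - phi n d x \<theta> e)\<bar>}
     \<le> 2 / real n ^ 10"
  unfolding model_pmf_def
proof (rule pair_prob_le)
  fix G :: "nat \<times> nat \<Rightarrow> bool"
  define tg where "tg = C * sqrt (real n * p * ln (real n) / real L)"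
  have n: "real n > 0" using i by simp
  have Lpos: "real L > 0" using L by simp
  have tgpos: "real L * tg > 0" unfolding tg_def using ln Lpos C n p by simp
  let ?S = "{y. deg n (fst (G, y)) i < K * real n * p \<and>
         real L * tg \<le> \<bar>\<Sum>e\<in>edges n (fst (G, y)). cd n d x e i * (\<Sum>l<L. of_bool (snd (G, y) (e, l)) - phi n d x \<theta> e)\<bar>}"
  have "measure_pmf.prob (outcome_pmf n d L x \<theta>) ?S \<le> 2 / real n ^ 10"
  proof (cases "deg n G i < K * real n * p \<and> deg n G i \<noteq> 0")
    case False
    have Se: "?S = {}"
    proof (cases "deg n G i < K * real n * p")
      case True
      then have d0: "deg n G i = 0" using False by simp
      have "(\<Sum>e\<in>edges n G. cd n d x e i * (\<Sum>l<L. of_bool (y (e, l)) - phi n d x \<theta> e)) = 0" for y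
        using deg0_cd[OF i d0] by simp
      then show ?thesis using tgpos by auto
    qed auto
    show ?thesis unfolding Se using n by simp
  next
    case True
    have dpos: "deg n G i > 0" using True deg_nonneg[of n G i] by simp
    have "?S \<subseteq> {y. real L * tg \<le> \<bar>\<Sum>e\<in>edges n G. cd n d x e i * (\<Sum>l<L. of_bool (y (e, l)) - phi n d x \<theta> e)\<bar>}"
      by auto
    then have "measure_pmf.prob (outcome_pmf n d L x \<theta>) ?S \<le> measure_pmf.prob (outcome_pmf n d L x \<theta>)
        {y. real L * tg \<le> \<bar>\<Sum>e\<in>edges n G. cd n d x e i * (\<Sum>l<L. of_bool (y (e, l)) - phi n d x \<theta> e)\<bar>}"
      by (rule measure_pmf.finite_measure_mono) simp
    also have "\<dots> \<le> 2 * exp (- 2 * (real L * tg)\<^sup>2 / (real L * (\<Sum>e\<in>edges n G. (cd n d x e i)\<^sup>2)))"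
      by (rule hoeff) (use tgpos in \<open>auto simp: edges_def\<close>)
    also have "(\<Sum>e\<in>edges n G. (cd n d x e i)\<^sup>2) = deg n G i" by (rule sum_cd_sq[OF i])
    also have "- 2 * (real L * tg)\<^sup>2 / (real L * deg n G i) = - (2 * C\<^sup>2 * (real n * p) * ln (real n) / deg n G i)"
      unfolding tg_def using Lpos ln n p by (simp add: power_mult_distrib power2_eq_square field_simps)
    also have "\<dots> \<le> - (real 10 * ln (real n))"
    proof -
      have "real 10 * ln (real n) * deg n G i \<le> real 10 * ln (real n) * (K * (real n * p))"
        using True ln by (intro mult_left_mono) (auto simp: mult_ac)
      also have "\<dots> = 2 * (5 * K) * (real n * p) * ln (real n)" by simp
      also have "\<dots> \<le> 2 * C\<^sup>2 * (real n * p) * ln (real n)"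
        using C ln n p by (intro mult_right_mono mult_left_mono) auto
      finally have "real 10 * ln (real n) \<le> 2 * C\<^sup>2 * (real n * p) * ln (real n) / deg n G i"
        using dpos by (simp add: field_simps)
      then show ?thesis by simp
    qed
    also have "2 * exp (- (real 10 * ln (real n))) = 2 / real n ^ 10" using n by (subst exp_mln) auto
    finally show ?thesis by - (simp_all add: mult_left_mono)
  qed
  then show "measure_pmf.prob (outcome_pmf n d L x \<theta>)
     {b. (G, b) \<in> {\<omega>. deg n (fst \<omega>) i < K * real n * p \<and>
         real L * (C * sqrt (real n * p * ln (real n) / real L)) \<le>
         \<bar>\<Sum>e\<in>edges n (fst \<omega>). cd n d x e i * (\<Sum>l<L. of_bool (snd \<omega> (e, l)) - phi n d x \<theta> e)\<bar>}}
     \<le> 2 / real n ^ 10" unfolding tg_def by simp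
qed

lemma numeric1:
  assumes D: "0 \<le> D" "D < K * real n * p" and n: "real n > 0" and p: "p > 0"
  shows "D\<^sup>2 * (real d + 1) / (4 * real n) \<le> K\<^sup>2 * real n * p\<^sup>2 * (real d + 1) / 4"
proof -
  have "D\<^sup>2 \<le> (K * real n * p)\<^sup>2" using D by (intro power_mono) auto
  then have "D\<^sup>2 * (real d + 1) / (4 * real n) \<le> (K * real n * p)\<^sup>2 * (real d + 1) / (4 * real n)"
    using n by (intro divide_right_mono mult_right_mono) auto
  also have "\<dots> = K\<^sup>2 * real n * p\<^sup>2 * (real d + 1) / 4"
    using n by (simp add: power2_eq_square field_simps)
  finally show ?thesis .
qed

lemma main_bound:
  fixes x :: "nat \<Rightarrow> nat \<Rightarrow> real" and \<theta> :: "nat \<Rightarrow> real"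
  assumes cp: "cp > 0" and CK: "C = (4 + 10 / cp)\<^sup>2 + 6" and n3: "n \<ge> 3" and p0: "0 \<le> p" and p1: "p \<le> 1" and L: "L \<ge> 1"
   and pn: "p * real n > cp * ln (real n)"
   and xb: "\<forall>i<n. sqrt (\<Sum>m<d. (x i m)\<^sup>2) \<le> sqrt ((real d + 1) / real n)" and i: "i < n"
  shows "measure_pmf.prob (model_pmf n d p L x \<theta>)
          {\<omega>. \<bar>grad_loss n d L x \<omega> i \<theta>\<bar> \<le> C * sqrt (real n * p * ln (real n) / real L)
             \<and> (\<Sum>j\<in>{..<n+d} - {i}. (hess_loss n d L x \<omega> i j \<theta>)\<^sup>2) \<le> C * (real n * p * (1 + real d * p))
             \<and> (\<Sum>s\<in>{n..<n+d}. (hess_loss n d L x \<omega> i s \<theta>)\<^sup>2) \<le> C * (real n * real d * p\<^sup>2)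
             \<and> (\<Sum>j\<in>{..<n} - {i}. \<bar>hess_loss n d L x \<omega> i j \<theta>\<bar>) \<le> C * (real n * p)
             \<and> (\<forall>a<n. \<forall>b<n. a \<noteq> b \<longrightarrow> edge \<omega> a b \<longrightarrow>
                  \<bar>ybar L \<omega> b a - measure_pmf.expectation (model_pmf n d p L x \<theta>) (\<lambda>\<omega>'. ybar L \<omega>' b a)\<bar>
                    \<le> C * sqrt (ln (real n) / real L))}
        \<ge> 1 - 5 / real n ^ 10" (is "measure_pmf.prob ?M ?Good \<ge> _")
proof -
  define K where "K = 4 + 10 / cp"
  have CK': "C = K\<^sup>2 + 6" unfolding K_def CK ..
  have K4: "K \<ge> 4" unfolding K_def using cp by simp
  have KK: "K \<le> K\<^sup>2" using K4 by (simp add: power2_eq_square)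
  have CK2: "K\<^sup>2 \<le> C" using CK' by simp
  have C6: "C \<ge> 6" using CK' by simp
  have Cpos: "C > 0" using C6 by simp
  have C2: "C\<^sup>2 \<ge> 6" using mult_mono[OF C6 C6] C6 by (simp add: power2_eq_square)
  have C5K: "C\<^sup>2 \<ge> 5 * K"
  proof -
    have "5 * K \<le> 6 * K\<^sup>2" using KK K4 by simp
    also have "\<dots> \<le> C * C" using CK2 C6 by (intro mult_mono) auto
    finally show ?thesis by (simp add: power2_eq_square)
  qed
  have nr: "real n > 0" using n3 by simp
  have ln: "ln (real n) > 0" using n3 by (intro ln_gt_zero) simp
  have ppos: "p > 0"
  proof (rule ccontr)
    assume "\<not> p > 0" then have "p = 0" using p0 by simp
    then show False using pn cp ln by (simp add: mult_pos_pos) (smt (verit) mult_pos_pos)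
  qed
  have xb': "\<forall>a<n. (\<Sum>m<d. (x a m)\<^sup>2) \<le> (real d + 1) / real n" using xb by simp
  define tg where "tg = C * sqrt (real n * p * ln (real n) / real L)"
  define ty where "ty = C * sqrt (ln (real n) / real L)"
  define gs where "gs \<omega> = (\<Sum>e\<in>edges n (fst \<omega>). cd n d x e i * (\<Sum>l<L. of_bool (snd \<omega> (e, l)) - phi n d x \<theta> e))" for \<omega>
  define B1 :: "sample set" where "B1 = {\<omega>. K * real n * p \<le> deg n (fst \<omega>) i}"
  define B2 :: "sample set" where "B2 = (\<Union>e\<in>pairs n. {\<omega>. real L * ty \<le> \<bar>\<Sum>l<L. of_bool (snd \<omega> (e, l)) - phi n d x \<theta> e\<bar>})"
  define B3 :: "sample set" where "B3 = {\<omega>. deg n (fst \<omega>) i < K * real n * p \<and> real L * tg \<le> \<bar>gs \<omega>\<bar>}"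
  have P1: "measure_pmf.prob ?M B1 \<le> 1 / real n ^ 10"
    unfolding B1_def by (rule claim_B1[OF cp p0 p1 pn _ K_def]) (use nr in simp)
  have P2: "measure_pmf.prob ?M B2 \<le> 2 / real n ^ 10"
    unfolding B2_def ty_def by (rule claim_B2[OF ln L C2 Cpos])
  have P3: "measure_pmf.prob ?M B3 \<le> 2 / real n ^ 10"
    unfolding B3_def tg_def gs_def by (rule claim_B3[OF i ln L ppos _ C5K Cpos]) (use K4 in simp)
  have Lpos: "real L > 0" using L by simp
  have incl: "UNIV - (B1 \<union> B2 \<union> B3) \<subseteq> ?Good"
  proof
    fix \<omega> assume \<omega>: "\<omega> \<in> UNIV - (B1 \<union> B2 \<union> B3)"
    define D where "D = deg n (fst \<omega>) i"
    have D0: "0 \<le> D" unfolding D_def by (rule deg_nonneg)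
    have DK: "D < K * real n * p" using \<omega> unfolding B1_def D_def by auto
    have gsb: "\<bar>gs \<omega>\<bar> < real L * tg" using \<omega> DK unfolding B3_def D_def by auto
    have ysb: "\<bar>\<Sum>l<L. of_bool (snd \<omega> (e, l)) - phi n d x \<theta> e\<bar> < real L * ty" if "e \<in> pairs n" for e
      using \<omega> that unfolding B2_def by auto
    have Hx: "(\<Sum>s\<in>{n..<n+d}. (hess_loss n d L x \<omega> i s \<theta>)\<^sup>2) \<le> K\<^sup>2 * real n * p\<^sup>2 * (real d + 1) / 4"
      using sum_sq_hess_x[OF i xb', of L \<omega> \<theta>] numeric1[OF D0 DK nr ppos, of d] unfolding D_def by linarith
    have np2: "real n * p\<^sup>2 \<le> real n * p" using ppos p1 nr by (simp add: power2_eq_square)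
    show "\<omega> \<in> ?Good"
    proof (intro CollectI conjI allI impI)
      show "\<bar>grad_loss n d L x \<omega> i \<theta>\<bar> \<le> C * sqrt (real n * p * ln (real n) / real L)"
      proof -
        have "\<bar>grad_loss n d L x \<omega> i \<theta>\<bar> = \<bar>gs \<omega>\<bar> / real L"
          unfolding grad_eq[OF L] gs_def using Lpos by (simp add: abs_divide)
        also have "\<dots> \<le> tg" using gsb Lpos by (simp add: divide_le_eq mult.commute)
        finally show ?thesis unfolding tg_def .
      qed
      show "(\<Sum>j\<in>{..<n} - {i}. \<bar>hess_loss n d L x \<omega> i j \<theta>\<bar>) \<le> C * (real n * p)"
      proof -
        have "(\<Sum>j\<in>{..<n} - {i}. \<bar>hess_loss n d L x \<omega> i j \<theta>\<bar>) \<le> D / 2" unfolding D_def by (rule sum_abs_hess[OF i])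
        also have "\<dots> \<le> K * real n * p" using DK D0 by simp
        also have "\<dots> \<le> C * (real n * p)" using KK CK2 nr ppos by (simp add: mult.assoc mult_right_mono)
        finally show ?thesis .
      qed
      show "(\<Sum>s\<in>{n..<n+d}. (hess_loss n d L x \<omega> i s \<theta>)\<^sup>2) \<le> C * (real n * real d * p\<^sup>2)"
      proof (cases "d = 0")
        case True then show ?thesis by simp
      next
        case False
        have "K\<^sup>2 * real n * p\<^sup>2 * (real d + 1) / 4 \<le> K\<^sup>2 * (real n * real d * p\<^sup>2)"
        proof -
          have "real d + 1 \<le> 4 * real d" using False by simp
          then have "K\<^sup>2 * (real n * p\<^sup>2) * (real d + 1) \<le> K\<^sup>2 * (real n * p\<^sup>2) * (4 * real d)"
            using nr by (intro mult_left_mono) auto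
          then show ?thesis by (simp add: mult_ac)
        qed
        also have "\<dots> \<le> C * (real n * real d * p\<^sup>2)" using CK2 nr by (intro mult_right_mono) auto
        finally show ?thesis using Hx by linarith
      qed
      show "(\<Sum>j\<in>{..<n+d} - {i}. (hess_loss n d L x \<omega> i j \<theta>)\<^sup>2) \<le> C * (real n * p * (1 + real d * p))"
      proof -
        have split: "{..<n+d} - {i} = ({..<n} - {i}) \<union> {n..<n+d}" using i by auto
        have "(\<Sum>j\<in>{..<n+d} - {i}. (hess_loss n d L x \<omega> i j \<theta>)\<^sup>2) =
            (\<Sum>j\<in>{..<n} - {i}. (hess_loss n d L x \<omega> i j \<theta>)\<^sup>2) + (\<Sum>s\<in>{n..<n+d}. (hess_loss n d L x \<omega> i s \<theta>)\<^sup>2)"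
          unfolding split by (rule sum.union_disjoint) auto
        also have "\<dots> \<le> D / 8 + K\<^sup>2 * real n * p\<^sup>2 * (real d + 1) / 4"
          using sum_sq_hess_lt[OF i, of d L x \<omega> \<theta>] Hx unfolding D_def by linarith
        also have "\<dots> \<le> K * real n * p / 8 + (K\<^sup>2 * (real n * p) / 4 + K\<^sup>2 * (real n * real d * p\<^sup>2) / 4)"
        proof -
          have "K\<^sup>2 * (real n * p\<^sup>2) \<le> K\<^sup>2 * (real n * p)" by (rule mult_left_mono[OF np2]) simp
          then have "K\<^sup>2 * real n * p\<^sup>2 * (real d + 1) / 4 = K\<^sup>2 * (real n * p\<^sup>2) / 4 + K\<^sup>2 * (real n * real d * p\<^sup>2) / 4"
            by (simp add: algebra_simps)
          moreover have "K\<^sup>2 * (real n * p\<^sup>2) / 4 \<le> K\<^sup>2 * (real n * p) / 4"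
            using \<open>K\<^sup>2 * (real n * p\<^sup>2) \<le> K\<^sup>2 * (real n * p)\<close> by simp
          ultimately show ?thesis using DK by linarith
        qed
        also have "\<dots> \<le> C * (real n * p) + C * (real n * real d * p\<^sup>2)"
        proof -
          have a0: "K * (real n * p) \<le> K\<^sup>2 * (real n * p)" using KK nr ppos by (intro mult_right_mono) auto
          have a: "K * real n * p \<le> K\<^sup>2 * (real n * p)" using a0 by (simp add: mult.assoc)
          have b: "K\<^sup>2 * (real n * p) \<le> C * (real n * p)" using CK2 nr ppos by (intro mult_right_mono) auto
          have c: "K\<^sup>2 * (real n * real d * p\<^sup>2) \<le> C * (real n * real d * p\<^sup>2)" using CK2 nr by (intro mult_right_mono) auto
          have nn: "0 \<le> K\<^sup>2 * (real n * real d * p\<^sup>2)" by simp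
          have nn2: "0 \<le> K\<^sup>2 * (real n * p)" using ppos by simp
          show ?thesis using a b c nn nn2 by linarith
        qed
        also have "\<dots> = C * (real n * p * (1 + real d * p))" by (simp add: algebra_simps power2_eq_square)
        finally show ?thesis .
      qed
      fix a b assume ab: "a < n" "b < n" "a \<noteq> b"
      show "\<bar>ybar L \<omega> b a - measure_pmf.expectation ?M (\<lambda>\<omega>'. ybar L \<omega>' b a)\<bar> \<le> C * sqrt (ln (real n) / real L)"
      proof -
        have e: "(max a b, min a b) \<in> pairs n" using ab by (auto simp: pairs_def)
        have "\<bar>ybar L \<omega> b a - measure_pmf.expectation ?M (\<lambda>\<omega>'. ybar L \<omega>' b a)\<bar>
            = \<bar>\<Sum>l<L. of_bool (snd \<omega> ((max a b, min a b), l)) - phi n d x \<theta> (max a b, min a b)\<bar> / real L"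
          by (rule ybar_dev[OF ab L])
        also have "\<dots> \<le> ty" using ysb[OF e] Lpos by (simp add: divide_le_eq mult.commute)
        finally show ?thesis unfolding ty_def .
      qed
    qed
  qed
  have "measure_pmf.prob ?M (UNIV - (B1 \<union> B2 \<union> B3)) \<le> measure_pmf.prob ?M ?Good"
    by (rule measure_pmf.finite_measure_mono[OF incl]) simp
  moreover have "measure_pmf.prob ?M (UNIV - (B1 \<union> B2 \<union> B3)) = 1 - measure_pmf.prob ?M (B1 \<union> B2 \<union> B3)"
    using measure_pmf.prob_compl[of "B1 \<union> B2 \<union> B3" ?M] by simp
  moreover have "measure_pmf.prob ?M (B1 \<union> B2 \<union> B3) \<le> measure_pmf.prob ?M B1 + measure_pmf.prob ?M B2 + measure_pmf.prob ?M B3"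
  proof -
    have s: "measure_pmf.prob ?M (A \<union> B) \<le> measure_pmf.prob ?M A + measure_pmf.prob ?M B" for A B
      by (rule measure_subadditive) (simp_all add: measure_pmf.emeasure_finite)
    show ?thesis using s[of "B1 \<union> B2" B3] s[of B1 B2] by linarith
  qed
  ultimately show ?thesis using P1 P2 P3 by (simp add: field_simps)
qed

theorem lemma21:
  shows "\<forall>c\<^sub>p>0. \<forall>c\<^sub>L>0. \<exists>C C\<^sub>0 :: real. \<exists>N :: nat.
    \<forall>n d p L x \<theta>.
      n \<ge> N \<longrightarrow> d < n \<longrightarrow> 0 \<le> p \<longrightarrow> p \<le> 1 \<longrightarrow> L \<ge> 1 \<longrightarrow>
      p * real n > c\<^sub>p * ln (real n) \<longrightarrow>
      real n * p * real L \<ge> c\<^sub>L * ln (real n) \<longrightarrow>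
      (\<forall>i<n. sqrt (\<Sum>m<d. (x i m)\<^sup>2) \<le> sqrt ((real d + 1) / real n)) \<longrightarrow>
      (\<forall>i<n.
        measure_pmf.prob (model_pmf n d p L x \<theta>)
          {\<omega>. \<bar>grad_loss n d L x \<omega> i \<theta>\<bar> \<le> C * sqrt (real n * p * ln (real n) / real L)
             \<and> (\<Sum>j\<in>{..<n+d} - {i}. (hess_loss n d L x \<omega> i j \<theta>)\<^sup>2) \<le> C * (real n * p * (1 + real d * p))
             \<and> (\<Sum>s\<in>{n..<n+d}. (hess_loss n d L x \<omega> i s \<theta>)\<^sup>2) \<le> C * (real n * real d * p\<^sup>2)
             \<and> (\<Sum>j\<in>{..<n} - {i}. \<bar>hess_loss n d L x \<omega> i j \<theta>\<bar>) \<le> C * (real n * p)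
             \<and> (\<forall>a<n. \<forall>b<n. a \<noteq> b \<longrightarrow> edge \<omega> a b \<longrightarrow>
                  \<bar>ybar L \<omega> b a - measure_pmf.expectation (model_pmf n d p L x \<theta>) (\<lambda>\<omega>'. ybar L \<omega>' b a)\<bar>
                    \<le> C * sqrt (ln (real n) / real L))}
        \<ge> 1 - C\<^sub>0 / real n ^ 10)"
proof (intro allI impI)
  fix cp cL :: real assume cp: "cp > 0" and "cL > 0"
  show "\<exists>C C\<^sub>0 :: real. \<exists>N :: nat.
    \<forall>n d p L x \<theta>.
      n \<ge> N \<longrightarrow> d < n \<longrightarrow> 0 \<le> p \<longrightarrow> p \<le> 1 \<longrightarrow> L \<ge> 1 \<longrightarrow>
      p * real n > cp * ln (real n) \<longrightarrow>
      real n * p * real L \<ge> cL * ln (real n) \<longrightarrow>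
      (\<forall>i<n. sqrt (\<Sum>m<d. (x i m)\<^sup>2) \<le> sqrt ((real d + 1) / real n)) \<longrightarrow>
      (\<forall>i<n.
        measure_pmf.prob (model_pmf n d p L x \<theta>)
          {\<omega>. \<bar>grad_loss n d L x \<omega> i \<theta>\<bar> \<le> C * sqrt (real n * p * ln (real n) / real L)
             \<and> (\<Sum>j\<in>{..<n+d} - {i}. (hess_loss n d L x \<omega> i j \<theta>)\<^sup>2) \<le> C * (real n * p * (1 + real d * p))
             \<and> (\<Sum>s\<in>{n..<n+d}. (hess_loss n d L x \<omega> i s \<theta>)\<^sup>2) \<le> C * (real n * real d * p\<^sup>2)
             \<and> (\<Sum>j\<in>{..<n} - {i}. \<bar>hess_loss n d L x \<omega> i j \<theta>\<bar>) \<le> C * (real n * p)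
             \<and> (\<forall>a<n. \<forall>b<n. a \<noteq> b \<longrightarrow> edge \<omega> a b \<longrightarrow>
                  \<bar>ybar L \<omega> b a - measure_pmf.expectation (model_pmf n d p L x \<theta>) (\<lambda>\<omega>'. ybar L \<omega>' b a)\<bar>
                    \<le> C * sqrt (ln (real n) / real L))}
        \<ge> 1 - C\<^sub>0 / real n ^ 10)"
    apply (rule exI[of _ "(4 + 10 / cp)\<^sup>2 + 6"], rule exI[of _ 5], rule exI[of _ 3])
    apply (intro allI impI)
    apply (rule main_bound[OF cp refl])
            apply assumption+
    done
qed

end
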